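(* Let $\lambda>0$, $0<\gamma\le\frac{\lambda}{\lambda^2+2\lambda(1+\beta)\Phi_{\max}^2+(1+\beta)^2\Phi_{\max}^4}$, and $\tilde C=I-\gamma(A+\lambda I)$. For every random vector $x\in\mathbb R^d$ with $\mathbb E\|x\|_2^2<\infty$ and every $t\ge0$, $$\sum_{i=0}^{t}\mathbb E\big[\|\tilde C^ix\|_2^2\big]\le\frac{\mathbb E\|x\|_2^2}{\gamma(\mu+\lambda)}.$$
   Context: Let $\mathcal S=\{1,\dots,n\}$ be finite, $\pi$ a policy with irreducible state transition matrix $P^\pi$ and stationary distribution $\rho$, $D=\mathrm{diag}(\rho)$, $\beta\in(0,1)$, features $\phi:\mathcal S\to\mathbb R^d$ with $\|\phi(s)\|_2\le\Phi_{\max}$, $\Phi\in\mathbb R^{n\times d}$ with rows $\phi(s)^\top$ of full column rank, $A=\Phi^\top D(I-\beta P^\pi)\Phi$. The paper calls $\mu$ "the minimum eigenvalue of $A$"; take $\mu=\lambda_{\min}((A+A^\top)/2)>0$. *)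

theory Defs
  imports "HOL-Probability.Probability"
begin

fun matpow :: "real^'n^'n \<Rightarrow> nat \<Rightarrow> real^'n^'n" where
  "matpow A 0 = mat 1"
| "matpow A (Suc k) = A ** matpow A k"

definition stochastic_matrix :: "real^'n^'n \<Rightarrow> bool" where
  "stochastic_matrix P \<longleftrightarrow> (\<forall>i j. 0 \<le> P $ i $ j) \<and> (\<forall>i. (\<Sum>j\<in>UNIV. P $ i $ j) = 1)"

definition irreducible_matrix :: "real^'n^'n \<Rightarrow> bool" where
  "irreducible_matrix P \<longleftrightarrow> (\<forall>i j. \<exists>k. matpow P k $ i $ j > 0)"

definition stationary_distribution :: "real^'n^'n \<Rightarrow> real^'n \<Rightarrow> bool" where
  "stationary_distribution P \<rho> \<longleftrightarrow> (\<forall>i. 0 \<le> \<rho> $ i) \<and> (\<Sum>i\<in>UNIV. \<rho> $ i) = 1 \<and> \<rho> v* P = \<rho>"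

definition diag_mat :: "real^'n \<Rightarrow> real^'n^'n" where
  "diag_mat v = (\<chi> i j. if i = j then v $ i else 0)"

definition lambda_min :: "real^'n^'n \<Rightarrow> real" where
  "lambda_min S = Min {l. \<exists>v. v \<noteq> 0 \<and> S *v v = l *\<^sub>R v}"

end

theory Submission
  imports Defs
begin

lemma sym_dot:
  fixes S :: "real^'d^'d"
  assumes "transpose S = S"
  shows "u \<bullet> (S *v v) = (S *v u) \<bullet> v"
proof -
  have "u \<bullet> (S *v v) = (u v* S) \<bullet> v" by (simp add: dot_lmul_matrix)
  also have "u v* S = S *v u"
    by (metis assms vector_transpose_matrix)
  finally show ?thesis .
qed

lemma rayleigh_min:
  fixes S :: "real^'d^'d"
  assumes symS: "transpose S = S"
  shows "\<exists>m. (\<exists>v. v \<noteq> 0 \<and> S *v v = m *\<^sub>R v) \<and> (\<forall>w. w \<bullet> (S *v w) \<ge> m * (w \<bullet> w))"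
proof -
  define f where "f w = w \<bullet> (S *v w)" for w :: "real^'d"
  have cont: "continuous_on (sphere 0 1) f"
    unfolding f_def by (intro continuous_intros matrix_vector_mult_linear_continuous_on)
  have ne: "sphere (0::real^'d) 1 \<noteq> {}"
    by simp
  obtain v0 where v0: "v0 \<in> sphere 0 1" and mn: "\<forall>y\<in>sphere 0 1. f v0 \<le> f y"
    using continuous_attains_inf[OF compact_sphere ne cont] by blast
  define m where "m = f v0"
  have v0n: "v0 \<bullet> v0 = 1" using v0 by (simp add: dot_square_norm)
  have hge: "w \<bullet> (S *v w) \<ge> m * (w \<bullet> w)" for w
  proof (cases "w = 0")
    case True thus ?thesis by simp
  next
    case False
    define u where "u = (1 / norm w) *\<^sub>R w"
    have "u \<in> sphere 0 1" using False by (simp add: u_def)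
    hence "m \<le> f u" using mn m_def by auto
    also have "f u = (w \<bullet> (S *v w)) / (norm w)^2"
      by (simp add: f_def u_def matrix_vector_mult_scaleR power2_eq_square)
    finally have "m * (norm w)^2 \<le> w \<bullet> (S *v w)"
      using False by (simp add: divide_simps)
    thus ?thesis by (simp add: dot_square_norm)
  qed
  define h where "h w = w \<bullet> (S *v w) - m * (w \<bullet> w)" for w :: "real^'d"
  have hpos: "h w \<ge> 0" for w using hge[of w] by (simp add: h_def)
  have h0: "h v0 = 0" by (simp add: h_def m_def f_def v0n)
  define z where "z = S *v v0 - m *\<^sub>R v0"
  have hexp: "h (v0 + t *\<^sub>R z) = 2 * t * (z \<bullet> z) + t^2 * h z" for t
  proof -
    have s: "z \<bullet> (S *v v0) = (S *v z) \<bullet> v0" by (rule sym_dot[OF symS])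
    have "h (v0 + t *\<^sub>R z) = h v0 + t * (v0 \<bullet> (S *v z)) + t * (z \<bullet> (S *v v0))
           - 2 * t * m * (v0 \<bullet> z) + t^2 * h z"
      by (simp add: h_def matrix_vector_right_distrib matrix_vector_mult_scaleR inner_add
          inner_commute algebra_simps power2_eq_square)
    also have "v0 \<bullet> (S *v z) = z \<bullet> (S *v v0)" using s by (simp add: inner_commute)
    finally have "h (v0 + t *\<^sub>R z) = 2 * t * (z \<bullet> (S *v v0) - m * (v0 \<bullet> z)) + t^2 * h z"
      using h0 by (simp add: algebra_simps)
    also have "z \<bullet> (S *v v0) - m * (v0 \<bullet> z) = z \<bullet> z"
      by (simp add: z_def inner_diff inner_commute algebra_simps)
    finally show ?thesis .
  qed
  have "z \<bullet> z = 0"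
  proof (rule ccontr)
    assume nz: "z \<bullet> z \<noteq> 0"
    hence zp: "z \<bullet> z > 0" by (metis inner_ge_zero less_eq_real_def)
    show False
    proof (cases "h z = 0")
      case True
      have "0 \<le> h (v0 + (-1) *\<^sub>R z)" by (rule hpos)
      thus False using hexp[of "-1"] True zp by simp
    next
      case False
      hence hz: "h z > 0" using hpos[of z] by simp
      define t where "t = - (z \<bullet> z) / h z"
      have "0 \<le> h (v0 + t *\<^sub>R z)" by (rule hpos)
      also have "\<dots> = - ((z \<bullet> z)^2) / h z"
        unfolding hexp t_def using hz by (simp add: power2_eq_square field_simps)
      finally show False using hz zp by (simp add: divide_simps)
    qed
  qed
  hence "z = 0" by simp
  hence "S *v v0 = m *\<^sub>R v0" by (simp add: z_def)
  moreover have "v0 \<noteq> 0" using v0n by auto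
  ultimately show ?thesis using hge by blast
qed

lemma eigen_finite:
  fixes S :: "real^'d^'d"
  assumes symS: "transpose S = S"
  shows "finite {l. \<exists>v. v \<noteq> 0 \<and> S *v v = l *\<^sub>R v}"
proof -
  define E where "E = {l. \<exists>v. v \<noteq> 0 \<and> S *v v = l *\<^sub>R v}"
  define g where "g l = (SOME v. v \<noteq> 0 \<and> S *v v = l *\<^sub>R v)" for l
  have g: "g l \<noteq> 0 \<and> S *v g l = l *\<^sub>R g l" if "l \<in> E" for l
    using that unfolding E_def g_def by (metis (mono_tags, lifting) mem_Collect_eq someI_ex)
  have inj: "inj_on g E"
  proof (rule inj_onI)
    fix a b assume a: "a \<in> E" and b: "b \<in> E" and e: "g a = g b"
    have "a *\<^sub>R g a = b *\<^sub>R g a" using g[OF a] g[OF b] e by metis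
    thus "a = b" using g[OF a] by simp
  qed
  have orth: "pairwise orthogonal (g ` E)"
  proof (unfold pairwise_def, clarify)
    fix a b assume a: "a \<in> E" and b: "b \<in> E" and ne: "g a \<noteq> g b"
    have "a \<noteq> b" using ne by auto
    have "g a \<bullet> (S *v g b) = (S *v g a) \<bullet> g b" by (rule sym_dot[OF symS])
    hence "b * (g a \<bullet> g b) = a * (g a \<bullet> g b)" using g[OF a] g[OF b] by simp
    hence "g a \<bullet> g b = 0" using \<open>a \<noteq> b\<close> by auto
    thus "orthogonal (g a) (g b)" by (simp add: orthogonal_def)
  qed
  have "0 \<notin> g ` E" using g by auto
  hence "independent (g ` E)" using pairwise_orthogonal_independent orth by blast
  hence "finite (g ` E)" using independent_bound by blast
  thus ?thesis using finite_imageD inj E_def by blast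
qed

lemma A_bound:
  fixes P :: "real^'n^'n" and \<rho> :: "real^'n" and \<Phi> :: "real^'d^'n" and v :: "real^'d"
  assumes stoch: "stochastic_matrix P" and stat: "stationary_distribution P \<rho>"
    and b: "0 \<le> \<beta>" and feat: "\<forall>s. norm (\<Phi> $ s) \<le> \<Phi>max"
  shows "norm ((transpose \<Phi> ** diag_mat \<rho> ** (mat 1 - \<beta> *\<^sub>R P) ** \<Phi>) *v v)
           \<le> (1 + \<beta>) * \<Phi>max^2 * norm v"
proof -
  obtain s0 :: 'n where True by simp
  have Pm: "0 \<le> \<Phi>max" using feat norm_ge_zero order_trans by metis
  define y where "y = \<Phi> *v v"
  define z where "z = (mat 1 - \<beta> *\<^sub>R P) *v y"
  define w where "w = diag_mat \<rho> *v z"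
  have eq: "(transpose \<Phi> ** diag_mat \<rho> ** (mat 1 - \<beta> *\<^sub>R P) ** \<Phi>) *v v = transpose \<Phi> *v w"
    by (simp add: w_def z_def y_def matrix_vector_mul_assoc matrix_mul_assoc)
  have ys: "\<bar>y $ s\<bar> \<le> \<Phi>max * norm v" for s
  proof -
    have "y $ s = \<Phi> $ s \<bullet> v" by (simp add: y_def matrix_vector_mult_def inner_vec_def)
    hence "\<bar>y $ s\<bar> \<le> norm (\<Phi> $ s) * norm v" using Cauchy_Schwarz_ineq2 by simp
    also have "\<dots> \<le> \<Phi>max * norm v" using feat by (simp add: mult_right_mono)
    finally show ?thesis .
  qed
  have zs: "\<bar>z $ s\<bar> \<le> (1 + \<beta>) * \<Phi>max * norm v" for s
  proof -
    have "z = y - \<beta> *\<^sub>R (P *v y)"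
      by (simp add: z_def matrix_vector_mult_diff_rdistrib scaleR_matrix_vector_assoc)
    hence "z $ s = y $ s - \<beta> * (\<Sum>j\<in>UNIV. P $ s $ j * y $ j)"
      by (simp add: matrix_vector_mult_def)
    moreover have "\<bar>\<Sum>j\<in>UNIV. P $ s $ j * y $ j\<bar> \<le> \<Phi>max * norm v"
    proof -
      have "\<bar>\<Sum>j\<in>UNIV. P $ s $ j * y $ j\<bar> \<le> (\<Sum>j\<in>UNIV. P $ s $ j * (\<Phi>max * norm v))"
        using stoch unfolding stochastic_matrix_def
        by (intro order_trans[OF sum_abs] sum_mono) (simp add: abs_mult mult_left_mono ys)
      also have "\<dots> = \<Phi>max * norm v" using stoch unfolding stochastic_matrix_def
        by (simp add: sum_distrib_right[symmetric])
      finally show ?thesis .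
    qed
    ultimately have "\<bar>z $ s\<bar> \<le> \<bar>y $ s\<bar> + \<beta> * (\<Phi>max * norm v)"
      using b abs_triangle_ineq4[of "y $ s" "\<beta> * (\<Sum>j\<in>UNIV. P $ s $ j * y $ j)"]
        mult_left_mono[of "\<bar>\<Sum>j\<in>UNIV. P $ s $ j * y $ j\<bar>" "\<Phi>max * norm v" \<beta>]
      by (simp add: abs_mult)
    thus ?thesis using ys[of s] by (simp add: algebra_simps)
  qed
  have ws: "w $ s = \<rho> $ s * z $ s" for s
    by (simp add: w_def diag_mat_def matrix_vector_mult_def if_distrib[where f="\<lambda>x. x * _"] cong: if_cong)
  have teq: "transpose \<Phi> *v w = (\<Sum>s\<in>UNIV. w $ s *\<^sub>R \<Phi> $ s)"
    by (simp add: vec_eq_iff matrix_vector_mult_def transpose_def sum_component mult.commute)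
  have "norm (transpose \<Phi> *v w) \<le> (\<Sum>s\<in>UNIV. norm (w $ s *\<^sub>R \<Phi> $ s))"
    unfolding teq by (rule norm_sum)
  also have "\<dots> \<le> (\<Sum>s\<in>UNIV. \<rho> $ s * ((1 + \<beta>) * \<Phi>max * norm v * \<Phi>max))"
  proof (rule sum_mono)
    fix s
    have r: "0 \<le> \<rho> $ s" using stat unfolding stationary_distribution_def by simp
    have "norm (w $ s *\<^sub>R \<Phi> $ s) = \<rho> $ s * \<bar>z $ s\<bar> * norm (\<Phi> $ s)" using r
      by (simp add: ws abs_mult)
    also have "\<dots> \<le> \<rho> $ s * ((1 + \<beta>) * \<Phi>max * norm v * \<Phi>max)"
    proof -
      have "\<bar>z $ s\<bar> * norm (\<Phi> $ s) \<le> ((1 + \<beta>) * \<Phi>max * norm v) * \<Phi>max"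
        using zs[of s] feat b Pm by (intro mult_mono) auto
      hence "\<rho> $ s * (\<bar>z $ s\<bar> * norm (\<Phi> $ s)) \<le> \<rho> $ s * ((1 + \<beta>) * \<Phi>max * norm v * \<Phi>max)"
        using r by (rule mult_left_mono)
      thus ?thesis by (simp add: mult.assoc)
    qed
    finally show "norm (w $ s *\<^sub>R \<Phi> $ s) \<le> \<rho> $ s * ((1 + \<beta>) * \<Phi>max * norm v * \<Phi>max)" .
  qed
  also have "\<dots> = (1 + \<beta>) * \<Phi>max^2 * norm v" using stat unfolding stationary_distribution_def
    by (simp add: sum_distrib_right[symmetric] power2_eq_square)
  finally show ?thesis using eq by simp
qed

theorem mainTheorem18:
  fixes P :: "real^'n^'n" and \<rho> :: "real^'n" and \<beta> :: real
    and \<Phi> :: "real^'d^'n" and \<Phi>max :: real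
    and A :: "real^'d^'d" and mu lam gam :: real and C :: "real^'d^'d"
    and M :: "'w measure" and x :: "'w \<Rightarrow> real^'d" and t :: nat
  assumes stoch: "stochastic_matrix P"
    and irr: "irreducible_matrix P"
    and stat: "stationary_distribution P \<rho>"
    and beta: "0 < \<beta>" "\<beta> < 1"
    and feat: "\<forall>s. norm (\<Phi> $ s) \<le> \<Phi>max"
    and rank: "rank \<Phi> = CARD('d)"
    and A_def: "A = transpose \<Phi> ** diag_mat \<rho> ** (mat 1 - \<beta> *\<^sub>R P) ** \<Phi>"
    and mu_def: "mu = lambda_min ((1/2) *\<^sub>R (A + transpose A))"
    and mu_pos: "mu > 0"
    and lam: "lam > 0"
    and gam: "0 < gam"
      "gam \<le> lam / (lam\<^sup>2 + 2 * lam * (1 + \<beta>) * \<Phi>max\<^sup>2 + (1 + \<beta>)\<^sup>2 * \<Phi>max ^ 4)"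
    and C_def: "C = mat 1 - gam *\<^sub>R (A + lam *\<^sub>R mat 1)"
    and M: "prob_space M"
    and xmeas: "x \<in> borel_measurable M"
    and xint: "integrable M (\<lambda>\<omega>. (norm (x \<omega>))\<^sup>2)"
  shows "(\<Sum>i\<le>t. integral\<^sup>L M (\<lambda>\<omega>. (norm (matpow C i *v x \<omega>))\<^sup>2))
           \<le> integral\<^sup>L M (\<lambda>\<omega>. (norm (x \<omega>))\<^sup>2) / (gam * (mu + lam))"
proof -
  define S where "S = (1/2) *\<^sub>R (A + transpose A)"
  have symS: "transpose S = S"
    by (simp add: S_def vec_eq_iff transpose_def)
  obtain m where mev: "\<exists>v. v \<noteq> 0 \<and> S *v v = m *\<^sub>R v"
    and mq: "\<forall>w. w \<bullet> (S *v w) \<ge> m * (w \<bullet> w)"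
    using rayleigh_min[OF symS] by blast
  obtain v1 :: "real^'d" where v1: "v1 \<noteq> 0" using mev by blast
  have "mu \<le> m" unfolding mu_def lambda_min_def S_def[symmetric]
    using eigen_finite[OF symS] mev by (intro Min_le) auto
  have Sq: "w \<bullet> (S *v w) = w \<bullet> (A *v w)" for w
  proof -
    have t: "transpose A *v w = w v* A"
      by (metis transpose_transpose vector_transpose_matrix)
    have "w \<bullet> (transpose A *v w) = w \<bullet> (A *v w)"
      unfolding t by (metis dot_lmul_matrix inner_commute)
    moreover have "S *v w = (1/2) *\<^sub>R (A *v w + transpose A *v w)"
      by (simp add: S_def scaleR_matrix_vector_assoc[symmetric] matrix_vector_mult_add_rdistrib)
    ultimately show ?thesis by (simp add: inner_add)
  qed
  have Aq: "w \<bullet> (A *v w) \<ge> mu * (w \<bullet> w)" for w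
  proof -
    have "mu * (w \<bullet> w) \<le> m * (w \<bullet> w)" using \<open>mu \<le> m\<close> by (simp add: mult_right_mono)
    thus ?thesis using mq Sq by (metis order_trans)
  qed
  define K where "K = (1 + \<beta>) * \<Phi>max^2"
  have K0: "0 \<le> K" using beta by (simp add: K_def)
  have Ab: "norm (A *v w) \<le> K * norm w" for w
    unfolding A_def K_def using A_bound[OF stoch stat _ feat] beta by simp
  have gK: "gam * (K + lam)^2 \<le> lam"
  proof -
    have "lam\<^sup>2 + 2 * lam * (1 + \<beta>) * \<Phi>max\<^sup>2 + (1 + \<beta>)\<^sup>2 * \<Phi>max ^ 4 = (K + lam)^2"
      by (simp add: K_def power2_eq_square power4_eq_xxxx algebra_simps)
    moreover have "(K + lam)^2 > 0" using K0 lam by simp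
    ultimately show ?thesis using gam(2) by (simp add: field_simps)
  qed
  define q where "q = 1 - gam * (mu + lam)"
  have contr: "(norm (C *v v))^2 \<le> q * (norm v)^2" for v
  proof -
    define B where "B = A *v v + lam *\<^sub>R v"
    have Cv: "C *v v = v - gam *\<^sub>R B"
      by (simp add: C_def B_def matrix_vector_mult_diff_rdistrib matrix_vector_mult_add_rdistrib
          scaleR_matrix_vector_assoc[symmetric] matrix_vector_mul_lid)
    have e: "(norm (C *v v))^2 = v \<bullet> v - 2 * gam * (v \<bullet> B) + gam^2 * (B \<bullet> B)"
      unfolding Cv power2_norm_eq_inner by (simp add: inner_diff inner_commute algebra_simps power2_eq_square)
    have vB: "v \<bullet> B \<ge> (mu + lam) * (v \<bullet> v)"
      using Aq[of v] by (simp add: B_def inner_add algebra_simps)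
    have nB: "norm B \<le> (K + lam) * norm v"
      using Ab[of v] norm_triangle_ineq[of "A *v v" "lam *\<^sub>R v"] lam
      by (simp add: B_def algebra_simps)
    have "B \<bullet> B \<le> ((K + lam) * norm v)^2"
      using nB by (simp add: power2_norm_eq_inner[symmetric] power_mono)
    also have "\<dots> = (K + lam)^2 * (v \<bullet> v)"
      by (simp add: power_mult_distrib power2_norm_eq_inner)
    finally have "gam^2 * (B \<bullet> B) \<le> gam^2 * ((K + lam)^2 * (v \<bullet> v))"
      by (simp add: mult_left_mono)
    also have "\<dots> = gam * (gam * (K + lam)^2) * (v \<bullet> v)"
      by (simp add: power2_eq_square)
    also have "\<dots> \<le> gam * lam * (v \<bullet> v)"
      using gK gam(1) by (simp add: mult_right_mono mult_left_mono)
    finally have g2: "gam^2 * (B \<bullet> B) \<le> gam * lam * (v \<bullet> v)" .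
    have g1: "2 * gam * (v \<bullet> B) \<ge> 2 * gam * ((mu + lam) * (v \<bullet> v))"
      using vB gam(1) by simp
    have "gam * mu * (v \<bullet> v) \<ge> 0" using gam(1) mu_pos by simp
    hence "(norm (C *v v))^2 \<le> (1 - gam * (mu + lam)) * (v \<bullet> v)"
      using e g1 g2 by (simp add: algebra_simps)
    thus ?thesis by (simp add: q_def power2_norm_eq_inner)
  qed
  have q0: "0 \<le> q"
  proof -
    have "0 \<le> q * (norm v1)^2" using contr[of v1] by (meson order_trans zero_le_power2)
    thus ?thesis using v1 by (simp add: zero_le_mult_iff)
  qed
  have q1: "1 - q = gam * (mu + lam)" by (simp add: q_def)
  have qpos: "1 - q > 0" using q1 gam(1) mu_pos lam by simp
  have pw: "(norm (matpow C i *v v))^2 \<le> q^i * (norm v)^2" for i v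
  proof (induction i)
    case 0 thus ?case by (simp add: matrix_vector_mul_lid)
  next
    case (Suc i)
    have "(norm (matpow C (Suc i) *v v))^2 = (norm (C *v (matpow C i *v v)))^2"
      by (simp add: matrix_vector_mul_assoc)
    also have "\<dots> \<le> q * (norm (matpow C i *v v))^2" by (rule contr)
    also have "\<dots> \<le> q * (q^i * (norm v)^2)" using Suc q0 by (rule mult_left_mono)
    finally show ?case by simp
  qed
  define a where "a i = integral\<^sup>L M (\<lambda>\<omega>. (norm (matpow C i *v x \<omega>))\<^sup>2)" for i
  define a0 where "a0 = integral\<^sup>L M (\<lambda>\<omega>. (norm (x \<omega>))\<^sup>2)"
  have a0n: "0 \<le> a0" unfolding a0_def by (rule integral_nonneg_AE) simp
  have ai: "a i \<le> q^i * a0" for i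
  proof -
    have meas: "(\<lambda>\<omega>. (norm (matpow C i *v x \<omega>))\<^sup>2) \<in> borel_measurable M"
    proof -
      have "(\<lambda>y. (norm (matpow C i *v y))\<^sup>2) \<in> borel_measurable borel"
        by (intro borel_measurable_continuous_onI continuous_intros
            matrix_vector_mult_linear_continuous_on)
      from measurable_compose[OF xmeas this] show ?thesis by (simp add: o_def)
    qed
    have int2: "integrable M (\<lambda>\<omega>. q^i * (norm (x \<omega>))\<^sup>2)"
      using xint by simp
    have int1: "integrable M (\<lambda>\<omega>. (norm (matpow C i *v x \<omega>))\<^sup>2)"
      by (rule Bochner_Integration.integrable_bound[OF int2 meas]) (simp add: pw q0)
    have "a i \<le> integral\<^sup>L M (\<lambda>\<omega>. q^i * (norm (x \<omega>))\<^sup>2)"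
      unfolding a_def by (rule integral_mono[OF int1 int2]) (rule pw)
    thus ?thesis by (simp add: a0_def)
  qed
  have "(\<Sum>i\<le>t. a i) \<le> (\<Sum>i\<le>t. q^i) * a0"
    by (simp add: sum_distrib_right ai sum_mono)
  also have "(\<Sum>i\<le>t. q^i) = (1 - q^Suc t) / (1 - q)"
    using sum_gp_basic[of q t] qpos by (simp add: field_simps)
  also have "(1 - q^Suc t) / (1 - q) * a0 \<le> 1 / (1 - q) * a0"
    using qpos q0 a0n by (intro mult_right_mono divide_right_mono) auto
  finally show ?thesis unfolding a_def a0_def q1 by simp
qed

end
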